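(* Let $f:\mathbb{R}^2\to\mathbb{R}^2$ be a Topologically Anosov homeomorphism and let $x\in\mathbb{R}^2$ satisfy $\alpha(x)=\emptyset$. Then $\omega(x)\neq\emptyset$.
   Context: A homeomorphism $f:\mathbb{R}^2\to\mathbb{R}^2$ is Topologically Anosov (TA) if: (i) there is a continuous strictly positive $\epsilon:\mathbb{R}^2\to\mathbb{R}$ such that for all $x\neq y$ there is $k\in\mathbb{Z}$ with $\|f^k(x)-f^k(y)\|>\epsilon(f^k(x))$; and (ii) for every continuous strictly positive $\epsilon$ there is a continuous strictly positive $\delta$ such that every $\delta$-pseudo-orbit is $\epsilon$-shadowed by an orbit. A $\delta$-pseudo-orbit is a sequence $(x_n)_{n\in\mathbb{Z}}$ with $\|f(x_n)-x_{n+1}\|<\delta(f(x_n))$; it is $\epsilon$-shadowed by the orbit of $x$ if $\|x_n-f^n(x)\|<\epsilon(x_n)$ for all $n$. $\alpha(x),\omega(x)$ are the $\alpha$- and $\omega$-limit sets. *)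

theory Defs
  imports "HOL-Analysis.Analysis"
begin

type_synonym R2 = "real ^ 2"

definition iter_int :: "(R2 \<Rightarrow> R2) \<Rightarrow> int \<Rightarrow> R2 \<Rightarrow> R2" where
  "iter_int f k = (if 0 \<le> k then f ^^ nat k else inv f ^^ nat (- k))"

definition pos_cont :: "(R2 \<Rightarrow> real) \<Rightarrow> bool" where
  "pos_cont e \<longleftrightarrow> continuous_on UNIV e \<and> (\<forall>x. 0 < e x)"

definition pseudo_orbit :: "(R2 \<Rightarrow> R2) \<Rightarrow> (R2 \<Rightarrow> real) \<Rightarrow> (int \<Rightarrow> R2) \<Rightarrow> bool" where
  "pseudo_orbit f \<delta> xs \<longleftrightarrow> (\<forall>n. norm (f (xs n) - xs (n + 1)) < \<delta> (f (xs n)))"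

definition shadows :: "(R2 \<Rightarrow> R2) \<Rightarrow> (R2 \<Rightarrow> real) \<Rightarrow> (int \<Rightarrow> R2) \<Rightarrow> R2 \<Rightarrow> bool" where
  "shadows f \<epsilon> xs x \<longleftrightarrow> (\<forall>n. norm (xs n - iter_int f n x) < \<epsilon> (xs n))"

definition topologically_anosov :: "(R2 \<Rightarrow> R2) \<Rightarrow> bool" where
  "topologically_anosov f \<longleftrightarrow>
     (\<exists>g. homeomorphism UNIV UNIV f g) \<and>
     (\<exists>\<epsilon>. pos_cont \<epsilon> \<and>
        (\<forall>x y. x \<noteq> y \<longrightarrow> (\<exists>k. norm (iter_int f k x - iter_int f k y) > \<epsilon> (iter_int f k x)))) \<and>
     (\<forall>\<epsilon>. pos_cont \<epsilon> \<longrightarrow> (\<exists>\<delta>. pos_cont \<delta> \<and>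
        (\<forall>xs. pseudo_orbit f \<delta> xs \<longrightarrow> (\<exists>x. shadows f \<epsilon> xs x))))"

definition omega_limit :: "(R2 \<Rightarrow> R2) \<Rightarrow> R2 \<Rightarrow> R2 set" where
  "omega_limit f x = {y. \<exists>r. strict_mono r \<and> ((\<lambda>k. (f ^^ r k) x) \<longlongrightarrow> y) sequentially}"

definition alpha_limit :: "(R2 \<Rightarrow> R2) \<Rightarrow> R2 \<Rightarrow> R2 set" where
  "alpha_limit f x = {y. \<exists>r. strict_mono r \<and> ((\<lambda>k. (inv f ^^ r k) x) \<longlongrightarrow> y) sequentially}"

end

theory Submission
  imports Defs
begin

lemma escape_finite:
  fixes h :: "R2 \<Rightarrow> R2"
  assumes "{y. \<exists>r. strict_mono r \<and> ((\<lambda>k. (h ^^ r k) x) \<longlongrightarrow> y) sequentially} = {}"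
  shows "finite {m. dist p ((h ^^ m) x) < 1}"
proof (rule ccontr)
  assume "infinite {m. dist p ((h ^^ m) x) < 1}"
  then obtain r :: "nat \<Rightarrow> nat" where r: "strict_mono r" "\<forall>n. r n \<in> {m. dist p ((h ^^ m) x) < 1}"
    by (metis infinite_enumerate)
  then have "\<forall>n. (\<lambda>k. (h ^^ r k) x) n \<in> cball p 1" by (auto simp: less_imp_le)
  then obtain l s where s: "strict_mono s" "((\<lambda>k. (h ^^ r k) x) \<circ> s) \<longlonglongrightarrow> l"
    using compact_imp_seq_compact[OF compact_cball[of p 1]] unfolding seq_compact_def by metis
  have "strict_mono (r \<circ> s)" using r(1) s(1) by (rule strict_mono_o)
  moreover have "((\<lambda>k. (h ^^ (r \<circ> s) k) x) \<longlongrightarrow> l) sequentially" using s(2) by (simp add: comp_def)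
  ultimately have "l \<in> {y. \<exists>r. strict_mono r \<and> ((\<lambda>k. (h ^^ r k) x) \<longlongrightarrow> y) sequentially}" by blast
  then show False using assms by simp
qed

lemma cont_funpow:
  fixes h :: "R2 \<Rightarrow> R2"
  assumes "continuous_on UNIV h"
  shows "continuous_on UNIV (h ^^ m)"
proof (induction m)
  case 0 then show ?case by (simp add: continuous_on_id)
next
  case (Suc m)
  then show ?case using assms
    by (simp add: continuous_on_compose2[of UNIV h UNIV "h^^m"])
qed

lemma funpow_cancel:
  fixes f g :: "R2 \<Rightarrow> R2"
  assumes "\<And>y. f (g y) = y"
  shows "(f ^^ m) ((g ^^ m) y) = y"
proof (induction m arbitrary: y)
  case 0 then show ?case by simp
next
  case (Suc m)
  have e1: "(g ^^ Suc m) y = g ((g ^^ m) y)" by simp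
  have e2: "\<And>w. (f ^^ Suc m) w = (f ^^ m) (f w)" by (simp add: funpow_Suc_right del: funpow.simps)
  have "(f ^^ Suc m) ((g ^^ Suc m) y) = (f ^^ m) (f (g ((g ^^ m) y)))"
    by (simp only: e1 e2)
  also have "\<dots> = y" using assms Suc by simp
  finally show ?case .
qed

lemma pair_dist_bound:
  fixes w q :: R2 and r :: real
  shows "dist (w, 0::real) (q, r) \<le> dist w q + \<bar>r\<bar>"
proof -
  have "dist (w, 0::real) (q, r) = sqrt ((dist w q)\<^sup>2 + (dist 0 r)\<^sup>2)" by (rule dist_Pair_Pair)
  also have "\<dots> \<le> \<bar>dist w q\<bar> + \<bar>dist 0 r\<bar>" by (rule sqrt_sum_squares_le_sum_abs)
  finally show ?thesis by simp
qed

lemma pin_point: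
  fixes z x :: R2
  assumes "\<And>m. dist z x < inverse (real (Suc m))"
  shows "z = x"
proof (rule ccontr)
  assume "z \<noteq> x"
  then have "0 < dist z x" by simp
  then obtain n where "inverse (real (Suc n)) < dist z x" using reals_Archimedean by blast
  with assms[of n] show False by simp
qed

theorem mainTheorem10:
  fixes f :: "real ^ 2 \<Rightarrow> real ^ 2" and x :: "real ^ 2"
  assumes "topologically_anosov f"
    and "alpha_limit f x = {}"
  shows "omega_limit f x \<noteq> {}"
proof
  assume om: "omega_limit f x = {}"
  from assms(1) obtain g where hom: "homeomorphism UNIV UNIV f g"
    unfolding topologically_anosov_def by blast
  from assms(1) have shad: "\<And>\<epsilon>. pos_cont \<epsilon> \<Longrightarrow> (\<exists>\<delta>. pos_cont \<delta> \<and>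
        (\<forall>xs. pseudo_orbit f \<delta> xs \<longrightarrow> (\<exists>x. shadows f \<epsilon> xs x)))"
    unfolding topologically_anosov_def by blast
  have gf: "\<And>y. g (f y) = y" and fg: "\<And>y. f (g y) = y"
    and cf: "continuous_on UNIV f" and cg: "continuous_on UNIV g"
    using hom unfolding homeomorphism_def by auto
  have invf: "inv f = g" using gf fg inv_equality by blast
  have al: "{y. \<exists>r. strict_mono r \<and> ((\<lambda>k. (g ^^ r k) x) \<longlongrightarrow> y) sequentially} = {}"
    using assms(2) unfolding alpha_limit_def invf .
  have omm: "{y. \<exists>r. strict_mono r \<and> ((\<lambda>k. (f ^^ r k) x) \<longlongrightarrow> y) sequentially} = {}"
    using om unfolding omega_limit_def .
  have itp: "\<And>m z. iter_int f (int m) z = (f ^^ m) z" by (simp add: iter_int_def)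
  have itn: "\<And>m z. iter_int f (- int m) z = (g ^^ m) z" by (simp add: iter_int_def invf)
  have "\<forall>m. \<exists>r>0. \<forall>w. dist w ((g ^^ m) x) < r \<longrightarrow> dist ((f ^^ m) w) x < inverse (real (Suc m))"
  proof
    fix m
    have c: "continuous_on UNIV (f ^^ m)" using cf by (rule cont_funpow)
    have "(f ^^ m) ((g ^^ m) x) = x" using fg by (rule funpow_cancel)
    with c show "\<exists>r>0. \<forall>w. dist w ((g ^^ m) x) < r \<longrightarrow> dist ((f ^^ m) w) x < inverse (real (Suc m))"
      unfolding continuous_on_iff by (metis UNIV_I inverse_positive_iff_positive of_nat_0_less_iff zero_less_Suc)
  qed
  then obtain \<rho>1 where r1: "\<And>m. \<rho>1 m > 0"
    "\<And>m w. dist w ((g ^^ m) x) < \<rho>1 m \<Longrightarrow> dist ((f ^^ m) w) x < inverse (real (Suc m))"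
    by metis
  have "\<forall>m. \<exists>r>0. \<forall>w. dist w ((f ^^ Suc m) x) < r \<longrightarrow> dist ((g ^^ m) w) (f x) < inverse (real (Suc m))"
  proof
    fix m
    have c: "continuous_on UNIV (g ^^ m)" using cg by (rule cont_funpow)
    have "(g ^^ m) ((f ^^ m) (f x)) = f x" using gf by (rule funpow_cancel)
    then have e: "(g ^^ m) ((f ^^ Suc m) x) = f x" by (simp add: funpow_Suc_right del: funpow.simps)
    with c show "\<exists>r>0. \<forall>w. dist w ((f ^^ Suc m) x) < r \<longrightarrow> dist ((g ^^ m) w) (f x) < inverse (real (Suc m))"
      unfolding continuous_on_iff by (metis UNIV_I inverse_positive_iff_positive of_nat_0_less_iff zero_less_Suc)
  qed
  then obtain \<rho>2 where r2: "\<And>m. \<rho>2 m > 0"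
    "\<And>m w. dist w ((f ^^ Suc m) x) < \<rho>2 m \<Longrightarrow> dist ((g ^^ m) w) (f x) < inverse (real (Suc m))"
    by metis
  define T where "T = range (\<lambda>m. ((g ^^ m) x, \<rho>1 m)) \<union> range (\<lambda>m. ((f ^^ Suc m) x, \<rho>2 m))"
  define \<epsilon> where "\<epsilon> = (\<lambda>p::R2. infdist (p, 0::real) T / 2)"
  have Tne: "T \<noteq> {}" unfolding T_def by blast
  have epsb: "\<And>w q r. (q, r) \<in> T \<Longrightarrow> \<epsilon> w \<le> (dist w q + \<bar>r\<bar>) / 2"
  proof -
    fix w q r assume "(q, r) \<in> T"
    then have "infdist (w, 0::real) T \<le> dist (w, 0::real) (q, r)" by (rule infdist_le)
    also have "\<dots> \<le> dist w q + \<bar>r\<bar>" by (rule pair_dist_bound)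
    finally show "\<epsilon> w \<le> (dist w q + \<bar>r\<bar>) / 2" unfolding \<epsilon>_def by simp
  qed
  have pc: "pos_cont \<epsilon>"
    unfolding pos_cont_def
  proof
    show "continuous_on UNIV \<epsilon>" unfolding \<epsilon>_def
      by (intro continuous_intros) auto
    show "\<forall>p. 0 < \<epsilon> p"
    proof
      fix p :: R2
      define K1 where "K1 = {m. dist p ((g ^^ m) x) < 1}"
      define K2 where "K2 = Suc -` {m. dist p ((f ^^ m) x) < 1}"
      have fK1: "finite K1" unfolding K1_def using al by (rule escape_finite)
      have fK2: "finite K2" unfolding K2_def
        using escape_finite[OF omm] by (rule finite_vimageI) simp
      define r0 where "r0 = Min (insert 1 (\<rho>1 ` K1 \<union> \<rho>2 ` K2))"
      have fin: "finite (insert 1 (\<rho>1 ` K1 \<union> \<rho>2 ` K2))" using fK1 fK2 by simp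
      have r0pos: "0 < r0" unfolding r0_def using fin r1(1) r2(1) by (auto simp: Min_gr_iff)
      have r0le: "\<And>a. a \<in> insert 1 (\<rho>1 ` K1 \<union> \<rho>2 ` K2) \<Longrightarrow> r0 \<le> a"
        unfolding r0_def using fin by simp
      have lb: "\<forall>t\<in>T. r0 \<le> dist (p, 0::real) t"
      proof
        fix t assume "t \<in> T"
        then consider m where "t = ((g ^^ m) x, \<rho>1 m)" | m where "t = ((f ^^ Suc m) x, \<rho>2 m)"
          unfolding T_def by blast
        then show "r0 \<le> dist (p, 0::real) t"
        proof cases
          case 1
          have d1: "dist p ((g ^^ m) x) \<le> dist (p, 0::real) t"
            using dist_fst_le[of "(p, 0::real)" t] 1 by simp
          have d2: "\<rho>1 m \<le> dist (p, 0::real) t"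
            using dist_snd_le[of "(p, 0::real)" t] 1 r1(1)[of m] by simp
          show ?thesis
          proof (cases "m \<in> K1")
            case True then show ?thesis using r0le[of "\<rho>1 m"] d2 by auto
          next
            case False then show ?thesis using r0le[of 1] d1 unfolding K1_def by auto
          qed
        next
          case 2
          have d1: "dist p ((f ^^ Suc m) x) \<le> dist (p, 0::real) t"
            using dist_fst_le[of "(p, 0::real)" t] 2 by simp
          have d2: "\<rho>2 m \<le> dist (p, 0::real) t"
            using dist_snd_le[of "(p, 0::real)" t] 2 r2(1)[of m] by simp
          show ?thesis
          proof (cases "m \<in> K2")
            case True then show ?thesis using r0le[of "\<rho>2 m"] d2 by auto
          next
            case False then show ?thesis using r0le[of 1] d1 unfolding K2_def by auto
          qed
        qed
      qed
      have "r0 \<le> infdist (p, 0::real) T"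
        unfolding infdist_notempty[OF Tne] using Tne lb by (intro cINF_greatest) auto
      then show "0 < \<epsilon> p" unfolding \<epsilon>_def using r0pos by simp
    qed
  qed
  obtain \<delta> where pd: "pos_cont \<delta>" and sh: "\<And>xs. pseudo_orbit f \<delta> xs \<Longrightarrow> \<exists>z. shadows f \<epsilon> xs z"
    using shad[OF pc] by blast
  have dpos: "0 < \<delta> (f x)" using pd unfolding pos_cont_def by blast
  define y where "y = f x + (\<delta> (f x) / 2) *\<^sub>R axis 1 (1::real)"
  have ny: "norm (f x - y) = \<delta> (f x) / 2" unfolding y_def using dpos by simp
  have yne: "y \<noteq> f x" using ny dpos by auto
  define xs where "xs = (\<lambda>n::int. if n \<le> 0 then (g ^^ nat (- n)) x else (f ^^ nat (n - 1)) y)"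
  have po: "pseudo_orbit f \<delta> xs"
    unfolding pseudo_orbit_def
  proof
    fix n :: int
    have "f (xs n) = xs (n + 1) \<or> n = 0"
    proof (cases "n < 0")
      case True
      then have "nat (- n) = Suc (nat (- (n + 1)))" by simp
      then show ?thesis using True unfolding xs_def by (simp add: fg)
    next
      case False
      show ?thesis
      proof (cases "n = 0")
        case True then show ?thesis by simp
      next
        case False
        with \<open>\<not> n < 0\<close> have "nat n = Suc (nat (n - 1))" "n > 0" by auto
        then show ?thesis unfolding xs_def by simp
      qed
    qed
    then show "norm (f (xs n) - xs (n + 1)) < \<delta> (f (xs n))"
    proof
      assume "f (xs n) = xs (n + 1)"
      then show ?thesis using pd unfolding pos_cont_def by simp
    next
      assume "n = 0"
      then show ?thesis using ny dpos unfolding xs_def by simp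
    qed
  qed
  obtain z where z: "\<And>n. norm (xs n - iter_int f n z) < \<epsilon> (xs n)"
    using sh[OF po] unfolding shadows_def by blast
  have zx: "z = x"
  proof (rule pin_point)
    fix m
    have "norm (xs (- int m) - iter_int f (- int m) z) < \<epsilon> (xs (- int m))" by (rule z)
    then have a: "norm ((g ^^ m) x - (g ^^ m) z) < \<epsilon> ((g ^^ m) x)" unfolding xs_def itn by simp
    have "((g ^^ m) x, \<rho>1 m) \<in> T" unfolding T_def by blast
    then have "\<epsilon> ((g ^^ m) x) \<le> (dist ((g ^^ m) x) ((g ^^ m) x) + \<bar>\<rho>1 m\<bar>) / 2" by (rule epsb)
    with a r1(1)[of m] have "dist ((g ^^ m) z) ((g ^^ m) x) < \<rho>1 m" by (simp add: dist_norm norm_minus_commute)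
    then have "dist ((f ^^ m) ((g ^^ m) z)) x < inverse (real (Suc m))" by (rule r1(2))
    then show "dist z x < inverse (real (Suc m))" by (simp add: funpow_cancel fg)
  qed
  have "y = f x"
  proof (rule pin_point)
    fix m
    have "norm (xs (int (Suc m)) - iter_int f (int (Suc m)) z) < \<epsilon> (xs (int (Suc m)))" by (rule z)
    then have a: "norm ((f ^^ m) y - (f ^^ Suc m) x) < \<epsilon> ((f ^^ m) y)"
      unfolding xs_def itp zx by simp
    have "((f ^^ Suc m) x, \<rho>2 m) \<in> T" unfolding T_def by blast
    then have "\<epsilon> ((f ^^ m) y) \<le> (dist ((f ^^ m) y) ((f ^^ Suc m) x) + \<bar>\<rho>2 m\<bar>) / 2" by (rule epsb)
    with a r2(1)[of m] have "dist ((f ^^ m) y) ((f ^^ Suc m) x) < \<rho>2 m" by (simp add: dist_norm)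
    then have "dist ((g ^^ m) ((f ^^ m) y)) (f x) < inverse (real (Suc m))" by (rule r2(2))
    then show "dist y (f x) < inverse (real (Suc m))" by (simp add: funpow_cancel gf)
  qed
  with yne show False by simp
qed

end
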